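(* For every configuration $\gamma_0$ one can (constructively) define: (a) a set of configurations $B(\gamma_0)$ with $\gamma_0\in B(\gamma_0)$, closed under $\mathrm{Step}^{(d)}$ and $\mathrm{Step}^{(p)}$ (if $\gamma\in B(\gamma_0)$ and $\gamma\to\gamma'$ is a d-step or a par-step then $\gamma'\in B(\gamma_0)$); (b) a set $D(\gamma_0)$ and a function $\Phi_{\gamma_0}:\Gamma\to D(\gamma_0)$ that does not depend on the $par$-variables (if $\gamma,\gamma'$ have the same $d$-values at all nodes then $\Phi_{\gamma_0}(\gamma)=\Phi_{\gamma_0}(\gamma')$); (c) a well-founded strict order $\prec_d$ on $D(\gamma_0)$, such that for all configurations $\gamma\in B(\gamma_0)$ and $\gamma'$ with $\gamma\xrightarrow{\mathrm{Step}^{(d)}}\gamma'$ we have $\Phi_{\gamma_0}(\gamma')\prec_d\Phi_{\gamma_0}(\gamma)$.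
   Context: Let $G$ be a finite, connected, undirected graph with node set $V$ and a distinguished node $r$ (the root). Each node $p$ has a fixed ordered list $N(p)$ of its neighbours. A configuration $\gamma$ assigns to each node $p$ a value $\gamma.p.d\in\mathbb N$ and a neighbour $\gamma.p.par\in N(p)$; $\Gamma$ denotes the set of configurations. For a non-root node $p$ let $Dist_p(\gamma)=\min\{\gamma.q.d+1 : q\in N(p)\}$. Algorithm BFS (Dolev et al.) has the following actions. Root: enabled iff $\gamma.r.d\neq 0$; executing it sets $r.d:=0$. Non-root $p$, action CD: enabled iff $\gamma.p.d\ne Dist_p(\gamma)$; executing sets $p.d:=Dist_p(\gamma)$. Non-root $p$, action CP: enabled iff $\gamma.p.d=Dist_p(\gamma)$ and $\gamma.q_0.d+1\neq\gamma.p.d$ where $q_0=\gamma.p.par$; executing sets $p.par$ to the first $q$ in $N(p)$ with $\gamma.q.d+1=\gamma.p.d$. A node is enabled if one of its actions is enabled. A step $\gamma\to\gamma'$ (unfair daemon) holds iff there is a nonempty set $S$ of nodes enabled in $\gamma$ such that $\gamma'$ is obtained by every $p\in S$ simultaneously executing its enabled action (evaluated in $\gamma$), all other nodes unchanged. $\mathrm{Step}^{(d)}$: steps with $\gamma.r.d=\gamma'.r.d$ and $\gamma.p.d\ne\gamma'.p.d$ for some node $p$. $\mathrm{Step}^{(p)}$: steps with $\gamma.p.d=\gamma'.p.d$ for all $p$. A strict order is well-founded if it has no infinite descending chain. *)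

theory Defs
  imports Main
begin

text \<open>Nodes form a finite type 'v (so V = UNIV). N p is the ordered neighbour list of p.\<close>

record 'v config =
  d   :: "'v \<Rightarrow> nat"
  par :: "'v \<Rightarrow> 'v"

definition bfs_graph :: "('v::finite \<Rightarrow> 'v list) \<Rightarrow> 'v \<Rightarrow> bool" where
  "bfs_graph N r \<longleftrightarrow>
     (\<forall>p. distinct (N p)) \<and>
     (\<forall>p. p \<notin> set (N p)) \<and>
     (\<forall>p q. q \<in> set (N p) \<longleftrightarrow> p \<in> set (N q)) \<and>
     (\<forall>p. (r, p) \<in> {(a, b). b \<in> set (N a)}\<^sup>*)"

definition Configs :: "('v \<Rightarrow> 'v list) \<Rightarrow> 'v config set" where
  "Configs N = {\<gamma>. \<forall>p. par \<gamma> p \<in> set (N p)}"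

definition Dist :: "('v \<Rightarrow> 'v list) \<Rightarrow> 'v config \<Rightarrow> 'v \<Rightarrow> nat" where
  "Dist N \<gamma> p = Min ((\<lambda>q. d \<gamma> q + 1) ` set (N p))"

definition CD_enabled :: "('v \<Rightarrow> 'v list) \<Rightarrow> 'v \<Rightarrow> 'v config \<Rightarrow> 'v \<Rightarrow> bool" where
  "CD_enabled N r \<gamma> p \<longleftrightarrow> p \<noteq> r \<and> d \<gamma> p \<noteq> Dist N \<gamma> p"

definition CP_enabled :: "('v \<Rightarrow> 'v list) \<Rightarrow> 'v \<Rightarrow> 'v config \<Rightarrow> 'v \<Rightarrow> bool" where
  "CP_enabled N r \<gamma> p \<longleftrightarrow> p \<noteq> r \<and> d \<gamma> p = Dist N \<gamma> p \<and>
     d \<gamma> (par \<gamma> p) + 1 \<noteq> d \<gamma> p"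

definition root_enabled :: "'v \<Rightarrow> 'v config \<Rightarrow> 'v \<Rightarrow> bool" where
  "root_enabled r \<gamma> p \<longleftrightarrow> p = r \<and> d \<gamma> r \<noteq> 0"

definition enabled :: "('v \<Rightarrow> 'v list) \<Rightarrow> 'v \<Rightarrow> 'v config \<Rightarrow> 'v \<Rightarrow> bool" where
  "enabled N r \<gamma> p \<longleftrightarrow> root_enabled r \<gamma> p \<or> CD_enabled N r \<gamma> p \<or> CP_enabled N r \<gamma> p"

definition new_d :: "('v \<Rightarrow> 'v list) \<Rightarrow> 'v \<Rightarrow> 'v config \<Rightarrow> 'v \<Rightarrow> nat" where
  "new_d N r \<gamma> p =
     (if p = r then 0 else if CD_enabled N r \<gamma> p then Dist N \<gamma> p else d \<gamma> p)"

definition new_par :: "('v \<Rightarrow> 'v list) \<Rightarrow> 'v \<Rightarrow> 'v config \<Rightarrow> 'v \<Rightarrow> 'v" where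
  "new_par N r \<gamma> p =
     (if CP_enabled N r \<gamma> p then hd (filter (\<lambda>q. d \<gamma> q + 1 = d \<gamma> p) (N p))
      else par \<gamma> p)"

text \<open>A step under the unfair (distributed) daemon.\<close>
definition step :: "('v \<Rightarrow> 'v list) \<Rightarrow> 'v \<Rightarrow> 'v config \<Rightarrow> 'v config \<Rightarrow> bool" where
  "step N r \<gamma> \<gamma>' \<longleftrightarrow> \<gamma> \<in> Configs N \<and>
     (\<exists>S. S \<noteq> {} \<and> (\<forall>p\<in>S. enabled N r \<gamma> p) \<and>
        \<gamma>' = \<lparr>d = (\<lambda>p. if p \<in> S then new_d N r \<gamma> p else d \<gamma> p),
              par = (\<lambda>p. if p \<in> S then new_par N r \<gamma> p else par \<gamma> p)\<rparr>)"

definition step_d :: "('v \<Rightarrow> 'v list) \<Rightarrow> 'v \<Rightarrow> 'v config \<Rightarrow> 'v config \<Rightarrow> bool" where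
  "step_d N r \<gamma> \<gamma>' \<longleftrightarrow> step N r \<gamma> \<gamma>' \<and> d \<gamma> r = d \<gamma>' r \<and> (\<exists>p. d \<gamma> p \<noteq> d \<gamma>' p)"

definition step_p :: "('v \<Rightarrow> 'v list) \<Rightarrow> 'v \<Rightarrow> 'v config \<Rightarrow> 'v config \<Rightarrow> bool" where
  "step_p N r \<gamma> \<gamma>' \<longleftrightarrow> step N r \<gamma> \<gamma>' \<and> (\<forall>p. d \<gamma> p = d \<gamma>' p)"

end

theory Submission imports Defs "HOL-Library.FuncSet" begin

definition Distf :: "('v \<Rightarrow> 'v list) \<Rightarrow> ('v \<Rightarrow> nat) \<Rightarrow> 'v \<Rightarrow> nat" where
  "Distf N f p = Min ((\<lambda>q. f q + 1) ` set (N p))"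

definition dstep :: "('v \<Rightarrow> 'v list) \<Rightarrow> ('v \<Rightarrow> nat) \<Rightarrow> ('v \<Rightarrow> nat) \<Rightarrow> bool" where
  "dstep N f g \<longleftrightarrow> f \<noteq> g \<and> (\<forall>p. g p \<noteq> f p \<longrightarrow> set (N p) \<noteq> {} \<and> g p = Distf N f p)"

lemma periodic_mult:
  fixes s :: "nat \<Rightarrow> 'a" and n k t :: nat
  assumes "\<forall>i. s (i + n) = s i"
  shows "s (t + k * n) = s t"
proof (induction k)
  case (Suc k)
  have "s (t + Suc k * n) = s ((t + k * n) + n)" by (simp add: algebra_simps)
  also have "\<dots> = s (t + k*n)" using assms by blast
  finally show ?case using Suc by simp
qed simp

lemma arrival:
  fixes s :: "nat \<Rightarrow> 'v \<Rightarrow> nat"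
  assumes per: "\<forall>i. s (i + n) = s i" and n: "n > 0" and ch: "s (Suc i0) p \<noteq> s i0 p"
  shows "\<exists>i. s (Suc i) p \<noteq> s i p \<and> s (Suc i) p = s t p"
proof -
  define t' where "t' = t + Suc i0 * n"
  have st: "s t' p = s t p" unfolding t'_def using periodic_mult[OF per, of t "Suc i0"] by (simp only:)
  have "Suc i0 \<le> Suc i0 * n" using n by (metis mult.right_neutral mult_le_mono2 Suc_leI One_nat_def)
  hence lt: "i0 < t'" unfolding t'_def by linarith
  define G where "G = {i. i < t' \<and> s (Suc i) p \<noteq> s i p}"
  have fG: "finite G" unfolding G_def by simp
  have i0G: "i0 \<in> G" unfolding G_def using lt ch by simp
  define i where "i = Max G"
  have iG: "i \<in> G" unfolding i_def using fG i0G using Max_in by blast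
  have mx: "\<And>j. j \<in> G \<Longrightarrow> j \<le> i" unfolding i_def using fG by simp
  have "\<forall>j. Suc i \<le> j \<longrightarrow> j \<le> t' \<longrightarrow> s j p = s (Suc i) p"
  proof
    fix j show "Suc i \<le> j \<longrightarrow> j \<le> t' \<longrightarrow> s j p = s (Suc i) p"
    proof (induction j)
      case (Suc j)
      show ?case
      proof (intro impI)
        assume a: "Suc i \<le> Suc j" "Suc j \<le> t'"
        show "s (Suc j) p = s (Suc i) p"
        proof (cases "j = i")
          case False
          hence ji: "Suc i \<le> j" using a by simp
          have "j \<notin> G" using mx ji by fastforce
          hence "s (Suc j) p = s j p" using a unfolding G_def by simp
          thus ?thesis using Suc ji a by simp
        qed simp
      qed
    qed simp
  qed
  moreover have "Suc i \<le> t'" using iG unfolding G_def by simp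
  ultimately have "s t' p = s (Suc i) p" by blast
  hence "s (Suc i) p = s t p" using st by simp
  moreover have "s (Suc i) p \<noteq> s i p" using iG unfolding G_def by simp
  ultimately show ?thesis by blast
qed

lemma no_periodic:
  fixes s :: "nat \<Rightarrow> 'v \<Rightarrow> nat"
  assumes per: "\<forall>i. s (i + n) = s i" and n: "n > 0" and st: "\<forall>i. dstep N (s i) (s (Suc i))"
  shows False
proof -
  define V where "V = {v. \<exists>i p. s (Suc i) p \<noteq> s i p \<and> v = s (Suc i) p}"
  have "s 0 \<noteq> s (Suc 0)" using st unfolding dstep_def by blast
  then obtain p0 where "s (Suc 0) p0 \<noteq> s 0 p0" by fastforce
  hence "s (Suc 0) p0 \<in> V" unfolding V_def by blast
  define m where "m = (LEAST v. v \<in> V)"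
  have "m \<in> V" unfolding m_def using \<open>s (Suc 0) p0 \<in> V\<close> by (rule LeastI)
  then obtain j p where chj: "s (Suc j) p \<noteq> s j p" and mj: "m = s (Suc j) p" unfolding V_def by blast
  have lm: "\<And>v. v \<in> V \<Longrightarrow> m \<le> v" unfolding m_def by (rule Least_le)
  have ne: "set (N p) \<noteq> {}" and md: "m = Distf N (s j) p" using st chj mj unfolding dstep_def by auto
  have "Distf N (s j) p \<in> (\<lambda>q. s j q + 1) ` set (N p)" unfolding Distf_def using ne by (simp add: Min_in)
  then obtain q where qN: "q \<in> set (N p)" and qm: "s j q + 1 = m" using md by auto
  have nq: "\<forall>i. s (Suc i) q = s i q"
  proof (rule ccontr)
    assume "\<not> (\<forall>i. s (Suc i) q = s i q)"
    then obtain i0 where "s (Suc i0) q \<noteq> s i0 q" by blast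
    from arrival[OF per n this, of j] obtain i where "s (Suc i) q \<noteq> s i q" "s (Suc i) q = s j q" by blast
    hence "s j q \<in> V" unfolding V_def by (metis (mono_tags, lifting) mem_Collect_eq)
    hence "m \<le> s j q" by (rule lm)
    with qm show False by simp
  qed
  have cq: "\<And>i. s i q = s 0 q"
  proof -
    fix i show "s i q = s 0 q" by (induction i) (use nq in auto)
  qed
  have allm: "\<And>u. s (Suc u) p \<noteq> s u p \<Longrightarrow> s (Suc u) p = m"
  proof -
    fix u assume cu: "s (Suc u) p \<noteq> s u p"
    have "s (Suc u) p = Distf N (s u) p" using st cu unfolding dstep_def by auto
    also have "\<dots> \<le> s u q + 1" unfolding Distf_def using qN by (simp add: Min_le)
    also have "\<dots> = m" using cq[of u] cq[of j] qm by simp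
    finally have "s (Suc u) p \<le> m" .
    moreover have "s (Suc u) p \<in> V" unfolding V_def using cu by blast
    ultimately show "s (Suc u) p = m" using lm by fastforce
  qed
  from arrival[OF per n chj, of j] obtain i where "s (Suc i) p \<noteq> s i p" "s (Suc i) p = s j p" by blast
  with allm have "s j p = m" by metis
  with chj mj show False by simp
qed

lemma acyclic_dstep: "acyclic {(f, g). dstep N f g}"
proof -
  { fix x assume "(x, x) \<in> {(f, g). dstep N f g}\<^sup>+"
    then obtain n where n: "n > 0" "(x, x) \<in> {(f, g). dstep N f g} ^^ n" by (auto simp: trancl_power)
    then obtain f where f: "f 0 = x" "f n = x" "\<forall>i<n. dstep N (f i) (f (Suc i))"
      by (auto simp: relpow_fun_conv)
    define s where "s i = f (i mod n)" for i
    have per: "\<forall>i. s (i + n) = s i" unfolding s_def by simp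
    have "\<forall>i. dstep N (s i) (s (Suc i))"
    proof
      fix i
      have lt: "i mod n < n" using n by simp
      show "dstep N (s i) (s (Suc i))"
      proof (cases "Suc (i mod n) = n")
        case True
        have "Suc i mod n = 0" using True by (metis mod_Suc)
        thus ?thesis using f True lt unfolding s_def by metis
      next
        case False
        hence "Suc i mod n = Suc (i mod n)" by (metis mod_Suc)
        thus ?thesis using f lt unfolding s_def by simp
      qed
    qed
    from no_periodic[OF per n(1) this] have False .
  }
  thus ?thesis unfolding acyclic_def by blast
qed


lemma height:
  fixes N :: "'v::finite \<Rightarrow> 'v list"
  assumes "bfs_graph N r"
  shows "\<exists>h::'v\<Rightarrow>nat. h r = 0 \<and> (\<forall>p. p \<noteq> r \<longrightarrow> (\<exists>q\<in>set (N p). h q < h p))"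
proof -
  define E where "E = {(a, b). b \<in> set (N a)}"
  have reach: "\<And>p. (r, p) \<in> E\<^sup>*" using assms unfolding bfs_graph_def E_def by blast
  have sym: "\<And>p q. q \<in> set (N p) \<longleftrightarrow> p \<in> set (N q)" using assms unfolding bfs_graph_def by blast
  define h where "h p = (LEAST n. (r, p) \<in> E ^^ n)" for p
  have hin: "\<And>p. (r, p) \<in> E ^^ h p"
  proof -
    fix p
    from reach[of p] obtain n where "(r, p) \<in> E ^^ n" by (auto simp: rtrancl_power)
    thus "(r, p) \<in> E ^^ h p" unfolding h_def by (rule LeastI)
  qed
  have "h r = 0" unfolding h_def by (rule Least_eq_0) simp
  moreover have "\<forall>p. p \<noteq> r \<longrightarrow> (\<exists>q\<in>set (N p). h q < h p)"
  proof (intro allI impI)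
    fix p assume pr: "p \<noteq> r"
    show "\<exists>q\<in>set (N p). h q < h p"
    proof (cases "h p")
      case 0
      with hin[of p] pr show ?thesis by simp
    next
      case (Suc k)
      with hin[of p] have "(r, p) \<in> E ^^ Suc k" by simp
      then obtain q where q1: "(r, q) \<in> E ^^ k" and q2: "(q, p) \<in> E" by (rule relpow_Suc_E)
      have "h q \<le> k" unfolding h_def using q1 by (rule Least_le)
      moreover have "q \<in> set (N p)" using q2 sym unfolding E_def by simp
      ultimately show ?thesis using Suc by force
    qed
  qed
  ultimately show ?thesis by blast
qed

lemma Dist_eq: "Dist N \<gamma> p = Distf N (d \<gamma>) p"
  unfolding Dist_def Distf_def by simp

lemma step_closed:
  fixes N :: "'v::finite \<Rightarrow> 'v list"
  assumes hh: "\<forall>p. p \<noteq> r \<longrightarrow> (\<exists>q\<in>set (N p). h q < h p)"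
    and bnd: "\<forall>p. d \<gamma> p \<le> M + h p"
    and st: "step N r \<gamma> \<gamma>'" and rt: "d \<gamma>' r = d \<gamma> r"
  shows "\<gamma>' \<in> Configs N \<and> (\<forall>p. d \<gamma>' p \<le> M + h p)"
proof -
  from st obtain S where cf: "\<gamma> \<in> Configs N" and en: "\<forall>p\<in>S. enabled N r \<gamma> p" and
    g': "\<gamma>' = \<lparr>d = (\<lambda>p. if p \<in> S then new_d N r \<gamma> p else d \<gamma> p),
              par = (\<lambda>p. if p \<in> S then new_par N r \<gamma> p else par \<gamma> p)\<rparr>"
    unfolding step_def by blast
  have "\<forall>p. par \<gamma>' p \<in> set (N p)"
  proof
    fix p
    show "par \<gamma>' p \<in> set (N p)"
    proof (cases "p \<in> S \<and> CP_enabled N r \<gamma> p")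
      case True
      hence pr: "p \<noteq> r" and dd: "d \<gamma> p = Dist N \<gamma> p" unfolding CP_enabled_def by auto
      from hh pr obtain q0 where "q0 \<in> set (N p)" by blast
      hence ne: "set (N p) \<noteq> {}" by auto
      have "Dist N \<gamma> p \<in> (\<lambda>q. d \<gamma> q + 1) ` set (N p)" unfolding Dist_def using ne by simp
      then obtain q where qN: "q \<in> set (N p)" and qd: "d \<gamma> q + 1 = d \<gamma> p" using dd by auto
      have "filter (\<lambda>q. d \<gamma> q + 1 = d \<gamma> p) (N p) \<noteq> []" using qN qd by (auto simp: filter_empty_conv)
      hence "hd (filter (\<lambda>q. d \<gamma> q + 1 = d \<gamma> p) (N p)) \<in> set (filter (\<lambda>q. d \<gamma> q + 1 = d \<gamma> p) (N p))"
        by (rule hd_in_set)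
      hence "hd (filter (\<lambda>q. d \<gamma> q + 1 = d \<gamma> p) (N p)) \<in> set (N p)" by simp
      thus ?thesis using True g' unfolding new_par_def by simp
    next
      case False
      hence "par \<gamma>' p = par \<gamma> p" using g' unfolding new_par_def by auto
      thus ?thesis using cf unfolding Configs_def by simp
    qed
  qed
  hence c': "\<gamma>' \<in> Configs N" unfolding Configs_def by simp
  have "\<forall>p. d \<gamma>' p \<le> M + h p"
  proof
    fix p
    show "d \<gamma>' p \<le> M + h p"
    proof (cases "p = r")
      case True thus ?thesis using rt bnd by simp
    next
      case False
      from hh False obtain q where qN: "q \<in> set (N p)" and hq: "h q < h p" by blast
      have "Dist N \<gamma> p \<le> d \<gamma> q + 1" unfolding Dist_def using qN by simp
      also have "\<dots> \<le> M + h p" using bnd[rule_format, of q] hq by linarith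
      finally have D: "Dist N \<gamma> p \<le> M + h p" .
      show ?thesis using g' D bnd False unfolding new_d_def by auto
    qed
  qed
  with c' show ?thesis by blast
qed

lemma stepd_dstep:
  fixes N :: "'v::finite \<Rightarrow> 'v list"
  assumes hh: "\<forall>p. p \<noteq> r \<longrightarrow> (\<exists>q\<in>set (N p). h q < h p)"
    and st: "step_d N r \<gamma> \<gamma>'"
  shows "dstep N (d \<gamma>) (d \<gamma>')"
proof -
  from st obtain S where en: "\<forall>p\<in>S. enabled N r \<gamma> p" and
    g': "\<gamma>' = \<lparr>d = (\<lambda>p. if p \<in> S then new_d N r \<gamma> p else d \<gamma> p),
              par = (\<lambda>p. if p \<in> S then new_par N r \<gamma> p else par \<gamma> p)\<rparr>"
    and rt: "d \<gamma> r = d \<gamma>' r" and ex: "\<exists>p. d \<gamma> p \<noteq> d \<gamma>' p"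
    unfolding step_d_def step_def by blast
  have "d \<gamma> \<noteq> d \<gamma>'" using ex by metis
  moreover have "\<forall>p. d \<gamma>' p \<noteq> d \<gamma> p \<longrightarrow> set (N p) \<noteq> {} \<and> d \<gamma>' p = Distf N (d \<gamma>) p"
  proof (intro allI impI)
    fix p assume ch: "d \<gamma>' p \<noteq> d \<gamma> p"
    have pr: "p \<noteq> r" using ch rt by auto
    from hh pr obtain q0 where "q0 \<in> set (N p)" by blast
    hence ne: "set (N p) \<noteq> {}" by auto
    have "p \<in> S" using ch g' by (auto split: if_splits)
    hence "d \<gamma>' p = new_d N r \<gamma> p" using g' by simp
    hence "d \<gamma>' p = Dist N \<gamma> p" using ch pr unfolding new_d_def by (auto split: if_splits)
    thus "set (N p) \<noteq> {} \<and> d \<gamma>' p = Distf N (d \<gamma>) p" using ne Dist_eq by metis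
  qed
  ultimately show ?thesis unfolding dstep_def by blast
qed

lemma finite_bounded_funs: "finite {f :: 'v::finite \<Rightarrow> nat. \<forall>p. f p \<le> K}"
proof -
  have "{f :: 'v \<Rightarrow> nat. \<forall>p. f p \<le> K} = Pi\<^sub>E UNIV (\<lambda>_. {..K})"
    by (auto simp: PiE_def Pi_def extensional_def)
  thus ?thesis by (simp add: finite_PiE)
qed


theorem proposition2:
  fixes N :: "'v::finite \<Rightarrow> 'v list" and r :: 'v
  assumes "bfs_graph N r"
  shows "\<forall>\<gamma>0 \<in> Configs N. \<exists>(B :: 'v config set) (D :: ('v \<Rightarrow> nat) set)
            (\<Phi> :: 'v config \<Rightarrow> ('v \<Rightarrow> nat)) (less :: ('v \<Rightarrow> nat) \<Rightarrow> ('v \<Rightarrow> nat) \<Rightarrow> bool).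
     \<gamma>0 \<in> B \<and> B \<subseteq> Configs N \<and>
     (\<forall>\<gamma> \<gamma>'. \<gamma> \<in> B \<and> (step_d N r \<gamma> \<gamma>' \<or> step_p N r \<gamma> \<gamma>') \<longrightarrow> \<gamma>' \<in> B) \<and>
     (\<forall>\<gamma> \<in> Configs N. \<Phi> \<gamma> \<in> D) \<and>
     (\<forall>\<gamma> \<in> Configs N. \<forall>\<gamma>' \<in> Configs N. d \<gamma> = d \<gamma>' \<longrightarrow> \<Phi> \<gamma> = \<Phi> \<gamma>') \<and>
     (\<forall>x \<in> D. \<not> less x x) \<and>
     (\<forall>x \<in> D. \<forall>y \<in> D. \<forall>z \<in> D. less x y \<and> less y z \<longrightarrow> less x z) \<and>
     wf {(x, y). x \<in> D \<and> y \<in> D \<and> less x y} \<and>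
     (\<forall>\<gamma> \<in> B. \<forall>\<gamma>'. step_d N r \<gamma> \<gamma>' \<longrightarrow> less (\<Phi> \<gamma>') (\<Phi> \<gamma>))"
proof (intro ballI)
  fix \<gamma>0 :: "'v config" assume g0: "\<gamma>0 \<in> Configs N"
  obtain h :: "'v \<Rightarrow> nat" where h0: "h r = 0" and hh: "\<forall>p. p \<noteq> r \<longrightarrow> (\<exists>q\<in>set (N p). h q < h p)"
    using height[OF assms] by blast
  define M where "M = Max (range (d \<gamma>0))"
  define H where "H = Max (range h)"
  define K where "K = M + H"
  define B where "B = {\<gamma> \<in> Configs N. d \<gamma> r = d \<gamma>0 r \<and> (\<forall>p. d \<gamma> p \<le> M + h p)}"
  define D where "D = {f :: 'v \<Rightarrow> nat. \<forall>p. f p \<le> K}"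
  define \<Phi> where "\<Phi> \<gamma> = (\<lambda>p. min (d \<gamma> p) K)" for \<gamma> :: "'v config"
  define R where "R = {(\<Phi> \<gamma>', \<Phi> \<gamma>) | \<gamma> \<gamma>'. \<gamma> \<in> B \<and> step_d N r \<gamma> \<gamma>'}"
  define less where "less x y = ((x, y) \<in> R\<^sup>+)" for x y :: "'v \<Rightarrow> nat"
  have hH: "\<And>p. h p \<le> H" unfolding H_def by simp
  have dM: "\<And>p. d \<gamma>0 p \<le> M" unfolding M_def by simp
  have PhiB: "\<And>\<gamma>. \<gamma> \<in> B \<Longrightarrow> \<Phi> \<gamma> = d \<gamma>"
  proof
    fix \<gamma> p assume "\<gamma> \<in> B"
    hence "d \<gamma> p \<le> M + h p" unfolding B_def by blast
    also have "\<dots> \<le> K" unfolding K_def using hH[of p] by simp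
    finally show "\<Phi> \<gamma> p = d \<gamma> p" unfolding \<Phi>_def by simp
  qed
  have clos: "\<forall>\<gamma> \<gamma>'. \<gamma> \<in> B \<and> (step_d N r \<gamma> \<gamma>' \<or> step_p N r \<gamma> \<gamma>') \<longrightarrow> \<gamma>' \<in> B"
  proof (intro allI impI)
    fix \<gamma> \<gamma>' assume a: "\<gamma> \<in> B \<and> (step_d N r \<gamma> \<gamma>' \<or> step_p N r \<gamma> \<gamma>')"
    hence st: "step N r \<gamma> \<gamma>'" and rt: "d \<gamma>' r = d \<gamma> r"
      unfolding step_d_def step_p_def by auto
    have bnd: "\<forall>p. d \<gamma> p \<le> M + h p" and r0: "d \<gamma> r = d \<gamma>0 r" using a unfolding B_def by auto
    from step_closed[OF hh bnd st rt] rt r0 show "\<gamma>' \<in> B" unfolding B_def by simp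
  qed
  have g0B: "\<gamma>0 \<in> B" unfolding B_def using g0 dM by (simp add: trans_le_add1)
  have PhiD: "\<And>\<gamma>. \<Phi> \<gamma> \<in> D" unfolding D_def \<Phi>_def by simp
  have RD: "R \<subseteq> D \<times> D" unfolding R_def using PhiD by blast
  have finR: "finite R"
    by (rule finite_subset[OF RD]) (simp add: D_def finite_bounded_funs)
  have "R \<subseteq> {(f, g). dstep N f g}\<inverse>"
  proof
    fix x assume "x \<in> R"
    then obtain \<gamma> \<gamma>' where x: "x = (\<Phi> \<gamma>', \<Phi> \<gamma>)" and gB: "\<gamma> \<in> B" and st: "step_d N r \<gamma> \<gamma>'"
      unfolding R_def by blast
    have g'B: "\<gamma>' \<in> B" using clos gB st by blast
    have "dstep N (d \<gamma>) (d \<gamma>')" by (rule stepd_dstep[OF hh st])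
    thus "x \<in> {(f, g). dstep N f g}\<inverse>" using x PhiB[OF gB] PhiB[OF g'B] by simp
  qed
  moreover have "acyclic ({(f, g). dstep N f g}\<inverse>)" using acyclic_dstep[of N] by simp
  ultimately have acR: "acyclic R" by (rule acyclic_subset[rotated])
  have wfR: "wf (R\<^sup>+)" using finite_acyclic_wf[OF finR acR] by (rule wf_trancl)
  have "\<gamma>0 \<in> B \<and> B \<subseteq> Configs N \<and>
     (\<forall>\<gamma> \<gamma>'. \<gamma> \<in> B \<and> (step_d N r \<gamma> \<gamma>' \<or> step_p N r \<gamma> \<gamma>') \<longrightarrow> \<gamma>' \<in> B) \<and>
     (\<forall>\<gamma> \<in> Configs N. \<Phi> \<gamma> \<in> D) \<and>
     (\<forall>\<gamma> \<in> Configs N. \<forall>\<gamma>' \<in> Configs N. d \<gamma> = d \<gamma>' \<longrightarrow> \<Phi> \<gamma> = \<Phi> \<gamma>') \<and>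
     (\<forall>x \<in> D. \<not> less x x) \<and>
     (\<forall>x \<in> D. \<forall>y \<in> D. \<forall>z \<in> D. less x y \<and> less y z \<longrightarrow> less x z) \<and>
     wf {(x, y). x \<in> D \<and> y \<in> D \<and> less x y} \<and>
     (\<forall>\<gamma> \<in> B. \<forall>\<gamma>'. step_d N r \<gamma> \<gamma>' \<longrightarrow> less (\<Phi> \<gamma>') (\<Phi> \<gamma>))"
  proof (intro conjI)
    show "\<gamma>0 \<in> B" by (rule g0B)
    show "B \<subseteq> Configs N" unfolding B_def by blast
    show "\<forall>\<gamma> \<gamma>'. \<gamma> \<in> B \<and> (step_d N r \<gamma> \<gamma>' \<or> step_p N r \<gamma> \<gamma>') \<longrightarrow> \<gamma>' \<in> B" by (rule clos)
    show "\<forall>\<gamma> \<in> Configs N. \<Phi> \<gamma> \<in> D" using PhiD by blast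
    show "\<forall>\<gamma> \<in> Configs N. \<forall>\<gamma>' \<in> Configs N. d \<gamma> = d \<gamma>' \<longrightarrow> \<Phi> \<gamma> = \<Phi> \<gamma>'" unfolding \<Phi>_def by simp
    show "\<forall>x \<in> D. \<not> less x x" using acR unfolding less_def acyclic_def by blast
    show "\<forall>x \<in> D. \<forall>y \<in> D. \<forall>z \<in> D. less x y \<and> less y z \<longrightarrow> less x z"
      unfolding less_def by (meson trancl_trans)
    show "wf {(x, y). x \<in> D \<and> y \<in> D \<and> less x y}"
      by (rule wf_subset[OF wfR]) (auto simp: less_def)
    show "\<forall>\<gamma> \<in> B. \<forall>\<gamma>'. step_d N r \<gamma> \<gamma>' \<longrightarrow> less (\<Phi> \<gamma>') (\<Phi> \<gamma>)"
      unfolding less_def R_def by blast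
  qed
  thus "\<exists>(B :: 'v config set) (D :: ('v \<Rightarrow> nat) set)
            (\<Phi> :: 'v config \<Rightarrow> ('v \<Rightarrow> nat)) (less :: ('v \<Rightarrow> nat) \<Rightarrow> ('v \<Rightarrow> nat) \<Rightarrow> bool).
     \<gamma>0 \<in> B \<and> B \<subseteq> Configs N \<and>
     (\<forall>\<gamma> \<gamma>'. \<gamma> \<in> B \<and> (step_d N r \<gamma> \<gamma>' \<or> step_p N r \<gamma> \<gamma>') \<longrightarrow> \<gamma>' \<in> B) \<and>
     (\<forall>\<gamma> \<in> Configs N. \<Phi> \<gamma> \<in> D) \<and>
     (\<forall>\<gamma> \<in> Configs N. \<forall>\<gamma>' \<in> Configs N. d \<gamma> = d \<gamma>' \<longrightarrow> \<Phi> \<gamma> = \<Phi> \<gamma>') \<and>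
     (\<forall>x \<in> D. \<not> less x x) \<and>
     (\<forall>x \<in> D. \<forall>y \<in> D. \<forall>z \<in> D. less x y \<and> less y z \<longrightarrow> less x z) \<and>
     wf {(x, y). x \<in> D \<and> y \<in> D \<and> less x y} \<and>
     (\<forall>\<gamma> \<in> B. \<forall>\<gamma>'. step_d N r \<gamma> \<gamma>' \<longrightarrow> less (\<Phi> \<gamma>') (\<Phi> \<gamma>))" by blast
qed

end
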